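(* Consider the system $x_{k+1}=Ax_k+Bu_k$ with $(A,B)$ stabilizable, constraint sets $\mathcal{X}=\{x\mid C_xx\le c_x\}$, $\mathcal{U}=\{u\mid C_uu\le c_u\}$ (with $0\in\operatorname{int}\mathcal{X}$, $0\in\operatorname{int}\mathcal{U}$), cost $J=\sum_{k=0}^\infty x_k^TQx_k+u_k^TRu_k$ with $Q$ positive semidefinite and $R$ positive definite, and LQR gain $K_{\text{lqr}}$ (the optimal unconstrained feedback $u_k=-K_{\text{lqr}}x_k$ for $J$). Let the system be controlled by a ReLU network $u_k=\mathcal{N}(x_k;\theta)$ with $L$ hidden layers, closed loop $f_{\text{cl}}(x)=Ax+B\mathcal{N}(x;\theta)$, let $\Gamma_{\text{eq}}=G(0)$ and $\mathcal{R}_{\text{eq}}=\{x\mid G(x)=\Gamma_{\text{eq}}\}$, and suppose $W_{L+1}(W_{\Gamma_{\text{eq}},L}x+b_{\Gamma_{\text{eq}},L})+b_{L+1}=-K_{\text{lqr}}x$ for all $x\in\mathbb{R}^{n_x}$. Let $\mathcal{R}_{\text{lqr}}$ be the set of initial states from which the LQR feedback $u_k=-K_{\text{lqr}}x_k$ yields $x_k\in\mathcal{X}$, $u_k\in\mathcal{U}$ for all $k\ge0$, and let $\mathcal{R}_{\text{as}}$ be an admissible control-invariant set for the closed loop with $\mathcal{R}_{\text{as}}\subseteq\mathcal{R}_{\text{eq}}\cap\mathcal{R}_{\text{lqr}}$. Let $\mathcal{X}_{\text{in}}=\{x\mid C_{\text{in}}x\le c_{\text{in}}\}$ be a polytope,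 $k\ge1$, $C_{\text{out}}\in\mathbb{R}^{n_{\text{out}}\times n_x}$, $c_{\text{out}}^{*(i)}=\max_{x_0\in\mathcal{X}_{\text{in}}}C_{\text{out}}^{(i)}f_{\text{cl}}^k(x_0)$ and $\mathcal{X}^*_{k,\text{out}}=\{x\mid C_{\text{out}}x\le c^*_{\text{out}}\}$. If $\mathcal{X}^*_{k,\text{out}}\subseteq\mathcal{R}_{\text{as}}$, then the neural network controller drives the system to the origin optimally with respect to $J$ (i.e. it applies the LQR input $-K_{\text{lqr}}x$) for all $x\in\mathcal{R}_{\text{as}}$, and drives the system asymptotically to the origin for all $x\in\mathcal{X}_{\text{in}}$.
   Context: A ReLU network is $\mathcal{N}(x;\theta)=W_{L+1}\xi_L+b_{L+1}$ with $\xi_0=x$, $\xi_l=\max(0,W_l\xi_{l-1}+b_l)$ elementwise for $l=1,\dots,L$, where $W_l\in\mathbb{R}^{n_l\times n_{l-1}}$ ($n_0=n_x$), $b_l\in\mathbb{R}^{n_l}$, $W_{L+1}\in\mathbb{R}^{n_u\times n_L}$, $b_{L+1}\in\mathbb{R}^{n_u}$. The activation pattern is $G(x)=(\gamma_1(x),\dots,\gamma_L(x))$, $\gamma_l(x)^{(i)}=1$ iff $W_l^{(i)}\xi_{l-1}+b_l^{(i)}\ge0$, else $0$. For a fixed pattern $\Gamma=(\gamma_1,\dots,\gamma_L)$ set $\eta_0=x$, $\eta_l=\gamma_l\odot(W_l\eta_{l-1}+b_l)$; then $\eta_L=W_{\Gamma,L}x+b_{\Gamma,L}$ defines $W_{\Gamma,L},b_{\Gamma,L}$,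 and $\mathcal{N}(x;\theta)=W_{L+1}(W_{\Gamma_{\text{eq}},L}x+b_{\Gamma_{\text{eq}},L})+b_{L+1}$ on $\mathcal{R}_{\text{eq}}$. $f_{\text{cl}}^k$ denotes the $k$-fold composition. A set $\mathcal{C}$ is an admissible control-invariant set for the closed loop if $\mathcal{N}(x;\theta)\in\mathcal{U}$ for all $x\in\mathcal{C}$ and $f_{\text{cl}}(\mathcal{C})\subseteq\mathcal{C}$. *)

theory Defs
  imports Complex_Main
begin

text \<open>Vectors in R^n are represented as functions nat => real that vanish at
indices >= n; matrices as nat => nat => real (only the block i < rows, j < cols
is used). This explicit-dimension encoding is needed because the hidden-layer
widths n_1, ..., n_L vary with the (arbitrary) number L of layers.\<close>

type_synonym vec = "nat \<Rightarrow> real"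
type_synonym mat = "nat \<Rightarrow> nat \<Rightarrow> real"

definition vecs :: "nat \<Rightarrow> vec set" where
  "vecs n = {x. \<forall>i\<ge>n. x i = 0}"

definition zvec :: vec where "zvec = (\<lambda>_. 0)"

definition mv :: "nat \<Rightarrow> nat \<Rightarrow> mat \<Rightarrow> vec \<Rightarrow> vec" where
  "mv m n M x = (\<lambda>i. if i < m then (\<Sum>j<n. M i j * x j) else 0)"

definition vadd :: "vec \<Rightarrow> vec \<Rightarrow> vec" where
  "vadd x y = (\<lambda>i. x i + y i)"

definition vneg :: "vec \<Rightarrow> vec" where
  "vneg x = (\<lambda>i. - x i)"

definition quad :: "nat \<Rightarrow> mat \<Rightarrow> vec \<Rightarrow> real" where
  "quad n M x = (\<Sum>i<n. \<Sum>j<n. x i * M i j * x j)"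

definition psd :: "nat \<Rightarrow> mat \<Rightarrow> bool" where
  "psd n M \<longleftrightarrow> (\<forall>i<n. \<forall>j<n. M i j = M j i) \<and> (\<forall>x\<in>vecs n. quad n M x \<ge> 0)"

definition pd :: "nat \<Rightarrow> mat \<Rightarrow> bool" where
  "pd n M \<longleftrightarrow> (\<forall>i<n. \<forall>j<n. M i j = M j i) \<and> (\<forall>x\<in>vecs n. x \<noteq> zvec \<longrightarrow> quad n M x > 0)"

definition polyhedron :: "nat \<Rightarrow> nat \<Rightarrow> mat \<Rightarrow> vec \<Rightarrow> vec set" where
  "polyhedron n p C c = {x \<in> vecs n. \<forall>i<p. (\<Sum>j<n. C i j * x j) \<le> c i}"

definition bounded_set :: "nat \<Rightarrow> vec set \<Rightarrow> bool" where
  "bounded_set n S \<longleftrightarrow> (\<exists>M. \<forall>x\<in>S. \<forall>i<n. \<bar>x i\<bar> \<le> M)"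

definition zero_interior :: "nat \<Rightarrow> vec set \<Rightarrow> bool" where
  "zero_interior n S \<longleftrightarrow> (\<exists>e>0. \<forall>x\<in>vecs n. (\<forall>i<n. \<bar>x i\<bar> < e) \<longrightarrow> x \<in> S)"

definition to_origin :: "nat \<Rightarrow> (nat \<Rightarrow> vec) \<Rightarrow> bool" where
  "to_origin n xs \<longleftrightarrow> (\<forall>i<n. (\<lambda>k. xs k i) \<longlonglongrightarrow> 0)"

definition step :: "nat \<Rightarrow> nat \<Rightarrow> mat \<Rightarrow> mat \<Rightarrow> vec \<Rightarrow> vec \<Rightarrow> vec" where
  "step nx nu A B x u = vadd (mv nx nx A x) (mv nx nu B u)"

fun traj :: "nat \<Rightarrow> nat \<Rightarrow> mat \<Rightarrow> mat \<Rightarrow> (nat \<Rightarrow> vec) \<Rightarrow> vec \<Rightarrow> nat \<Rightarrow> vec" where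
  "traj nx nu A B u x0 0 = x0"
| "traj nx nu A B u x0 (Suc k) = step nx nu A B (traj nx nu A B u x0 k) (u k)"

fun fb_traj :: "nat \<Rightarrow> nat \<Rightarrow> mat \<Rightarrow> mat \<Rightarrow> mat \<Rightarrow> vec \<Rightarrow> nat \<Rightarrow> vec" where
  "fb_traj nx nu A B K x0 0 = x0"
| "fb_traj nx nu A B K x0 (Suc k) =
     step nx nu A B (fb_traj nx nu A B K x0 k) (vneg (mv nu nx K (fb_traj nx nu A B K x0 k)))"

definition stabilizable :: "nat \<Rightarrow> nat \<Rightarrow> mat \<Rightarrow> mat \<Rightarrow> bool" where
  "stabilizable nx nu A B \<longleftrightarrow>
     (\<exists>K. \<forall>x0\<in>vecs nx. to_origin nx (fb_traj nx nu A B K x0))"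

definition stage_cost :: "nat \<Rightarrow> nat \<Rightarrow> mat \<Rightarrow> mat \<Rightarrow> vec \<Rightarrow> vec \<Rightarrow> real" where
  "stage_cost nx nu Q R x u = quad nx Q x + quad nu R u"

definition lqr_gain :: "nat \<Rightarrow> nat \<Rightarrow> mat \<Rightarrow> mat \<Rightarrow> mat \<Rightarrow> mat \<Rightarrow> mat \<Rightarrow> bool" where
  "lqr_gain nx nu A B Q R K \<longleftrightarrow>
     (\<forall>x0\<in>vecs nx.
        let xs = fb_traj nx nu A B K x0;
            cK = (\<lambda>k. stage_cost nx nu Q R (xs k) (vneg (mv nu nx K (xs k))))
        in summable cK \<and> to_origin nx xs \<and>
           (\<forall>u. (\<forall>k. u k \<in> vecs nu) \<longrightarrow>
                summable (\<lambda>k. stage_cost nx nu Q R (traj nx nu A B u x0 k) (u k)) \<longrightarrow>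
                suminf cK \<le> suminf (\<lambda>k. stage_cost nx nu Q R (traj nx nu A B u x0 k) (u k))))"

text \<open>ReLU networks. A hidden layer is a triple (n_l, W_l, b_l); the input
dimension of layer l is n_{l-1} (n_0 = n_x).\<close>

type_synonym layer = "nat \<times> mat \<times> vec"

definition preact :: "nat \<Rightarrow> nat \<Rightarrow> mat \<Rightarrow> vec \<Rightarrow> vec \<Rightarrow> vec" where
  "preact n m W b x = (\<lambda>i. if i < n then (\<Sum>j<m. W i j * x j) + b i else 0)"

definition relu_layer :: "nat \<Rightarrow> nat \<Rightarrow> mat \<Rightarrow> vec \<Rightarrow> vec \<Rightarrow> vec" where
  "relu_layer n m W b x = (\<lambda>i. max 0 (preact n m W b x i))"

fun fwd :: "nat \<Rightarrow> layer list \<Rightarrow> vec \<Rightarrow> vec" where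
  "fwd m [] x = x"
| "fwd m ((n, W, b) # ls) x = fwd n ls (relu_layer n m W b x)"

fun outdim :: "nat \<Rightarrow> layer list \<Rightarrow> nat" where
  "outdim m [] = m"
| "outdim m ((n, W, b) # ls) = outdim n ls"

text \<open>Activation pattern G(x) = (gamma_1(x),...,gamma_L(x)); gamma_l(x)^(i) is
True (=1) iff the preactivation is >= 0 (entries i >= n_l are set to False).\<close>
fun pattern :: "nat \<Rightarrow> layer list \<Rightarrow> vec \<Rightarrow> (nat \<Rightarrow> bool) list" where
  "pattern m [] x = []"
| "pattern m ((n, W, b) # ls) x =
     (\<lambda>i. i < n \<and> preact n m W b x i \<ge> 0) # pattern n ls (relu_layer n m W b x)"

text \<open>eta_L for a fixed pattern Gamma: eta_l = gamma_l .* (W_l eta_{l-1} + b_l).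
By definition this is W_{Gamma,L} x + b_{Gamma,L}.\<close>
fun eta :: "nat \<Rightarrow> layer list \<Rightarrow> (nat \<Rightarrow> bool) list \<Rightarrow> vec \<Rightarrow> vec" where
  "eta m [] gs x = x"
| "eta m ((n, W, b) # ls) [] x = x"
| "eta m ((n, W, b) # ls) (g # gs) x =
     eta n ls gs (\<lambda>i. if g i then preact n m W b x i else 0)"

definition net :: "nat \<Rightarrow> layer list \<Rightarrow> nat \<Rightarrow> mat \<Rightarrow> vec \<Rightarrow> vec \<Rightarrow> vec" where
  "net nx ls nu Wo bo x = preact nu (outdim nx ls) Wo bo (fwd nx ls x)"

definition net_fixed :: "nat \<Rightarrow> layer list \<Rightarrow> nat \<Rightarrow> mat \<Rightarrow> vec \<Rightarrow> (nat \<Rightarrow> bool) list \<Rightarrow> vec \<Rightarrow> vec" where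
  "net_fixed nx ls nu Wo bo \<Gamma> x = preact nu (outdim nx ls) Wo bo (eta nx ls \<Gamma> x)"

definition admissible_invariant :: "(vec \<Rightarrow> vec) \<Rightarrow> (vec \<Rightarrow> vec) \<Rightarrow> vec set \<Rightarrow> vec set \<Rightarrow> bool" where
  "admissible_invariant N fcl U C \<longleftrightarrow> (\<forall>x\<in>C. N x \<in> U) \<and> fcl ` C \<subseteq> C"

end

theory Submission
  imports Defs
begin

lemma eta_pattern: "eta m ls (pattern m ls x) x = fwd m ls x"
proof (induction ls arbitrary: m x)
  case Nil then show ?case by simp
next
  case (Cons l ls)
  obtain n W b where l: "l = (n, W, b)" by (cases l) auto
  have e: "(\<lambda>i. if i < n \<and> preact n m W b x i \<ge> 0 then preact n m W b x i else 0)
           = relu_layer n m W b x"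
    by (rule ext) (auto simp: relu_layer_def preact_def)
  show ?case using Cons by (simp add: l e)
qed

lemma step_vecs: "step nx nu A B x u \<in> vecs nx"
  by (simp add: step_def vecs_def vadd_def mv_def)

theorem corollary1:
  fixes nx nu px pu pin nout k :: nat
    and A B Q R K Cx Cu Cin Cout Wo :: mat
    and cx cu cin cstar bo :: vec
    and ls :: "layer list"
    and Ras :: "vec set"
  defines "X \<equiv> polyhedron nx px Cx cx"
      and "U \<equiv> polyhedron nu pu Cu cu"
      and "N \<equiv> net nx ls nu Wo bo"
      and "fcl \<equiv> (\<lambda>x. step nx nu A B x (net nx ls nu Wo bo x))"
      and "Geq \<equiv> pattern nx ls zvec"
      and "Req \<equiv> {x \<in> vecs nx. pattern nx ls x = pattern nx ls zvec}"
      and "Rlqr \<equiv> {x0 \<in> vecs nx. \<forall>j. fb_traj nx nu A B K x0 j \<in> polyhedron nx px Cx cx \<and>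
                                     vneg (mv nu nx K (fb_traj nx nu A B K x0 j)) \<in> polyhedron nu pu Cu cu}"
      and "Xin \<equiv> polyhedron nx pin Cin cin"
      and "Xout \<equiv> polyhedron nx nout Cout cstar"
  assumes stab: "stabilizable nx nu A B"
    and X_int: "zero_interior nx X"
    and U_int: "zero_interior nu U"
    and Q_psd: "psd nx Q"
    and R_pd: "pd nu R"
    and K_lqr: "lqr_gain nx nu A B Q R K"
    and eq_lqr: "\<forall>x\<in>vecs nx. net_fixed nx ls nu Wo bo Geq x = vneg (mv nu nx K x)"
    and Ras_inv: "admissible_invariant N fcl U Ras"
    and Ras_sub: "Ras \<subseteq> Req \<inter> Rlqr"
    and Xin_polytope: "bounded_set nx Xin"
    and k_ge: "k \<ge> 1"
    and cstar_max: "\<forall>i<nout.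
          (\<exists>x0\<in>Xin. (\<Sum>j<nx. Cout i j * (fcl ^^ k) x0 j) = cstar i) \<and>
          (\<forall>x0\<in>Xin. (\<Sum>j<nx. Cout i j * (fcl ^^ k) x0 j) \<le> cstar i)"
    and Xout_sub: "Xout \<subseteq> Ras"
  shows "(\<forall>x\<in>Ras. (\<forall>j. N ((fcl ^^ j) x) = vneg (mv nu nx K ((fcl ^^ j) x)))
                 \<and> to_origin nx (\<lambda>j. (fcl ^^ j) x))
       \<and> (\<forall>x\<in>Xin. to_origin nx (\<lambda>j. (fcl ^^ j) x))"
proof -
  have Nfix: "N x = vneg (mv nu nx K x)" if "x \<in> Req" for x
  proof -
    have xv: "x \<in> vecs nx" and p: "pattern nx ls x = Geq" using that by (auto simp: Req_def Geq_def)
    have "N x = net_fixed nx ls nu Wo bo (pattern nx ls x) x"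
      by (simp add: N_def net_def net_fixed_def eta_pattern)
    also have "\<dots> = vneg (mv nu nx K x)" using eq_lqr xv p by simp
    finally show ?thesis .
  qed
  have inv: "fcl x \<in> Ras" if "x \<in> Ras" for x
    using Ras_inv that by (auto simp: admissible_invariant_def)
  have invj: "(fcl ^^ j) x \<in> Ras" if "x \<in> Ras" for x j
    by (induction j) (auto simp: that inv)
  have traj_eq: "(fcl ^^ j) x = fb_traj nx nu A B K x j" if "x \<in> Ras" for x j
  proof (induction j)
    case 0 then show ?case by simp
  next
    case (Suc j)
    have "(fcl ^^ j) x \<in> Req" using invj[OF that] Ras_sub by blast
    then have "N ((fcl ^^ j) x) = vneg (mv nu nx K ((fcl ^^ j) x))" by (rule Nfix)
    then show ?case using Suc by (simp add: fcl_def N_def)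
  qed
  have part1: "\<forall>x\<in>Ras. (\<forall>j. N ((fcl ^^ j) x) = vneg (mv nu nx K ((fcl ^^ j) x)))
                 \<and> to_origin nx (\<lambda>j. (fcl ^^ j) x)"
  proof
    fix x assume x: "x \<in> Ras"
    have "\<forall>j. N ((fcl ^^ j) x) = vneg (mv nu nx K ((fcl ^^ j) x))"
      using invj[OF x] Ras_sub Nfix by blast
    moreover have xv: "x \<in> vecs nx" using x Ras_sub by (auto simp: Req_def)
    have "to_origin nx (fb_traj nx nu A B K x)"
      using K_lqr xv by (auto simp: lqr_gain_def Let_def)
    then have "to_origin nx (\<lambda>j. (fcl ^^ j) x)"
      using traj_eq[OF x] by simp
    ultimately show "(\<forall>j. N ((fcl ^^ j) x) = vneg (mv nu nx K ((fcl ^^ j) x)))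
                 \<and> to_origin nx (\<lambda>j. (fcl ^^ j) x)" by blast
  qed
  have part2: "\<forall>x\<in>Xin. to_origin nx (\<lambda>j. (fcl ^^ j) x)"
  proof
    fix x assume x: "x \<in> Xin"
    obtain k' where k': "k = Suc k'" using k_ge by (cases k) auto
    have "(fcl ^^ k) x \<in> vecs nx" unfolding k' by (simp add: fcl_def step_vecs)
    moreover have "\<forall>i<nout. (\<Sum>j<nx. Cout i j * (fcl ^^ k) x j) \<le> cstar i"
      using cstar_max x by blast
    ultimately have "(fcl ^^ k) x \<in> Xout" by (simp add: Xout_def polyhedron_def)
    then have y: "(fcl ^^ k) x \<in> Ras" using Xout_sub by blast
    then have t: "to_origin nx (\<lambda>j. (fcl ^^ j) ((fcl ^^ k) x))" using part1 by blast
    show "to_origin nx (\<lambda>j. (fcl ^^ j) x)"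
      unfolding to_origin_def
    proof (intro allI impI)
      fix i assume i: "i < nx"
      have "(\<lambda>j. (fcl ^^ (j + k)) x i) \<longlonglongrightarrow> 0"
        using t i by (simp add: to_origin_def funpow_add)
      then show "(\<lambda>j. (fcl ^^ j) x i) \<longlonglongrightarrow> 0" by (rule LIMSEQ_offset)
    qed
  qed
  show ?thesis using part1 part2 by blast
qed

end
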